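(* Consider the one-dimensional obstacle problem $\min(v_t + \mathcal{A} v, v-\varphi(t,x)) = f(t,x)$ on $(0,T)\times(X_{\min},X_{\max})$ with $\mathcal{A} v = -a(t,x) v_{xx} + b(t,x) v_x + r(t,x) v$, $a=\frac12\sigma^2$, under the assumptions: $a$, $b$, $r$ bounded; there is $\eta_0>0$ with $a(t,x)\geq \eta_0$ for all $(t,x)$; and $a$ is Lipschitz continuous in $x$ uniformly in $t$. Use the uniform grid $x_j = X_{\min}+jh$, $j=0,\dots,J+1$, $h=(X_{\max}-X_{\min})/(J+1)$, time step $\tau=T/N$, $t_n=n\tau$, and let $A$ be the $J\times J$ centered finite-difference matrix $A=\frac{1}{h^2}\mathrm{tridiag}(-a_i,\,2a_i,\,-a_i)+\frac{1}{2h}\mathrm{tridiag}(-b_i,\,0,\,b_i)+\mathrm{diag}(r_i)$ (with $a_i=a(t,x_i)$ etc.), $q^{n}$ the vector containing the Dirichlet boundary contributions, $\varphi^{n}_j=\varphi(t_n,x_j)$, $f^n_j=f(t_n,x_j)$, $g^{n}=\varphi^{n}+f^{n}$. Let $u^n\in\mathbb{R}^J$ solve the BDF2 obstacle scheme $$\min\Big( (I_J + \tfrac{2}{3}\tau A)\, u^{n+1} - \tfrac{4}{3} u^n + \tfrac{1}{3} u^{n-1} + \tfrac{2}{3} \tau q^{n+1} - \tfrac{2}{3}\tau f^{n+1},\ u^{n+1}-g^{n+1}\Big) = 0,\quad n\geq 1,$$ and let $v^n\in\mathbb{R}^J$ (values $v(t_n,x_j)$ of some function $v$) solve the perturbed scheme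 $$\min\Big( (I_J + \tfrac{2\tau}{3} A) v^{n+1} - \tfrac{4}{3} v^n + \tfrac{1}{3} v^{n-1} + \tfrac{2\tau}{3} q^{n+1} - \tfrac{2\tau}{3} f^{n+1} - \tfrac{2\tau}{3} \bar\varepsilon^n,\ v^{n+1}- g^{n+1}\Big) = 0,\quad n\geq1,$$ for given perturbations (consistency errors) $\bar\varepsilon^n\in\mathbb{R}^J$. Let $e^n := v^n-u^n$, let $N(x):=\big(\sum_{j=1}^{J+1}|x_j-x_{j-1}|^2\big)^{1/2}$ for $x\in\mathbb{R}^J$ (with $x_0:=x_{J+1}:=0$), and let $\eta>0$, $\gamma\geq 0$ be constants such that $\langle e, Ae\rangle \geq \eta N(e/h)^2-\gamma\|e\|_2^2$ for all $e\in\mathbb{R}^J$ (such constants exist under the assumptions above). Then, for $\tau>0$ sufficiently small, there exist a constant $C_1$ independent of $n$ and a constant $\bar\gamma>0$ such that for all $t_n\leq T$ $$e^{-\bar\gamma t_n} \|e^{n+1}\|^2_2 + \tau\eta \sum_{k=1}^{n} e^{-\bar \gamma t_k} N(e^{k+1}/h)^2 \leq C_1\Big(\|e^0\|^2_2 + \|e^1\|^2_2 + \tau \sum_{k=1}^{n} e^{-\bar \gamma t_k} \|\bar\varepsilon^{k}\|^2_2\Big),$$ where $N(e^k/h)^2=\sum_{j=1}^{J+1} \big|\frac{e^k_j-e^k_{j-1}}{h}\big|^2$.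
   Context: Unconditional $L^2$ stability of the BDF2 obstacle scheme in the 1D setting: the matrix $A$ may in general depend on time but is written without time index. The proof uses the variational characterization $\min(Bx-c,x-g)=0 \iff x\geq g$ and $\langle Bx-c, w-x\rangle\geq 0$ for all $w\geq g$, and in it $\bar\gamma = 2+4\gamma$. *)

theory Defs
  imports Complex_Main
begin

text \<open>Vectors in R^J are represented as functions nat => real, only the
  indices 1..J being relevant.  Matrices as nat => nat => real, indices 1..J.\<close>

definition l2sq :: "nat \<Rightarrow> (nat \<Rightarrow> real) \<Rightarrow> real" where
  "l2sq J x = (\<Sum>j=1..J. (x j)^2)"

definition l2norm :: "nat \<Rightarrow> (nat \<Rightarrow> real) \<Rightarrow> real" where
  "l2norm J x = sqrt (l2sq J x)"

definition ext0 :: "nat \<Rightarrow> (nat \<Rightarrow> real) \<Rightarrow> nat \<Rightarrow> real" where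
  "ext0 J x j = (if 1 \<le> j \<and> j \<le> J then x j else 0)"

definition Nnorm :: "nat \<Rightarrow> (nat \<Rightarrow> real) \<Rightarrow> real" where
  "Nnorm J x = sqrt (\<Sum>j=1..J+1. \<bar>ext0 J x j - ext0 J x (j - 1)\<bar>^2)"

definition inner_J :: "nat \<Rightarrow> (nat \<Rightarrow> real) \<Rightarrow> (nat \<Rightarrow> real) \<Rightarrow> real" where
  "inner_J J x y = (\<Sum>j=1..J. x j * y j)"

definition matvec :: "nat \<Rightarrow> (nat \<Rightarrow> nat \<Rightarrow> real) \<Rightarrow> (nat \<Rightarrow> real) \<Rightarrow> nat \<Rightarrow> real" where
  "matvec J M x i = (\<Sum>j=1..J. M i j * x j)"

definition fd_matrix ::
  "(real \<Rightarrow> real \<Rightarrow> real) \<Rightarrow> (real \<Rightarrow> real \<Rightarrow> real) \<Rightarrow> (real \<Rightarrow> real \<Rightarrow> real)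
   \<Rightarrow> real \<Rightarrow> real \<Rightarrow> real \<Rightarrow> nat \<Rightarrow> nat \<Rightarrow> real" where
  "fd_matrix a b r Xmin h t i j =
    (let xi = Xmin + real i * h in
     if j = i then 2 * a t xi / h^2 + r t xi
     else if j = i + 1 then - a t xi / h^2 + b t xi / (2 * h)
     else if j + 1 = i then - a t xi / h^2 - b t xi / (2 * h)
     else 0)"

definition bdf2_step ::
  "nat \<Rightarrow> (nat \<Rightarrow> nat \<Rightarrow> real) \<Rightarrow> real \<Rightarrow> (nat \<Rightarrow> real) \<Rightarrow> (nat \<Rightarrow> real) \<Rightarrow> (nat \<Rightarrow> real)
   \<Rightarrow> (nat \<Rightarrow> real) \<Rightarrow> (nat \<Rightarrow> real) \<Rightarrow> (nat \<Rightarrow> real)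
   \<Rightarrow> (nat \<Rightarrow> real) \<Rightarrow> bool" where
  "bdf2_step J A tau wnew wcur wold q f g pert \<longleftrightarrow>
    (\<forall>i\<in>{1..J}.
       min (wnew i + 2/3 * tau * matvec J A wnew i - 4/3 * wcur i + 1/3 * wold i
              + 2/3 * tau * q i - 2/3 * tau * f i - 2/3 * tau * pert i)
           (wnew i - g i) = 0)"

end

theory Submission
  imports Defs
begin


lemma var_pt:
  fixes X Y X' Y' :: real
  assumes "min X Y = 0" "min X' Y' = 0"
  shows "(X' - X) * (Y' - Y) \<le> 0"
proof -
  have x: "X \<ge> 0" "Y \<ge> 0" "X * Y = 0" using assms(1) by (auto simp: min_def split: if_splits)
  have y: "X' \<ge> 0" "Y' \<ge> 0" "X' * Y' = 0" using assms(2) by (auto simp: min_def split: if_splits)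
  have "(X' - X) * (Y' - Y) = - (X' * Y) - X * Y'" by (simp add: algebra_simps x(3) y(3))
  also have "\<dots> \<le> 0" using x y mult_nonneg_nonneg[of X' Y] mult_nonneg_nonneg[of X Y'] by linarith
  finally show ?thesis .
qed

lemma exp_le: "0 \<le> x \<Longrightarrow> x \<le> 1/2 \<Longrightarrow> exp(-2*x) \<le> 1 - (x::real)"
proof -
  assume h: "0 \<le> x" "x \<le> 1/2"
  have "1 + 2*x \<le> exp(2*x)" by (rule exp_ge_add_one_self)
  hence "exp(-2*x) \<le> 1/(1+2*x)" using h
    by (simp add: exp_minus divide_simps)
  also have "\<dots> \<le> 1 - x"
  proof -
    have "x * (1 - 2*x) \<ge> 0" using h by simp
    hence "(1-x)*(1+2*x) \<ge> 1" by (simp add: algebra_simps)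
    thus ?thesis using h by (simp add: divide_simps)
  qed
  finally show ?thesis .
qed

lemma l2sq_nonneg: "l2sq J x \<ge> 0" unfolding l2sq_def by (simp add: sum_nonneg)

lemma l2norm_sq: "(l2norm J x)^2 = l2sq J x"
  unfolding l2norm_def using l2sq_nonneg by simp

lemma step_ineq:
  fixes J :: nat and M :: "nat \<Rightarrow> nat \<Rightarrow> real" and \<tau> \<eta> \<gamma> h :: real
    and u0 u1 u2 v0 v1 v2 q f g eps a b c :: "nat \<Rightarrow> real"
  assumes coer: "\<forall>e. inner_J J e (matvec J M e) \<ge> \<eta> * (Nnorm J (\<lambda>j. e j / h))^2 - \<gamma> * (l2norm J e)^2"
  and su: "bdf2_step J M \<tau> u2 u1 u0 q f g (\<lambda>j. 0)"
  and sv: "bdf2_step J M \<tau> v2 v1 v0 q f g eps"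
  and ha: "\<And>j. a j = v2 j - u2 j" and hb: "\<And>j. b j = v1 j - u1 j" and hc: "\<And>j. c j = v0 j - u0 j"
  and tau: "\<tau> \<ge> 0" and gam: "\<gamma> \<ge> 0"
  shows "(1 - (2+4*\<gamma>)*\<tau>) * (l2sq J a + l2sq J (\<lambda>j. 2 * a j - b j))
          + 4*\<tau>*\<eta>*(Nnorm J (\<lambda>j. a j / h))^2
        \<le> l2sq J b + l2sq J (\<lambda>j. 2 * b j - c j) + 2*\<tau>*l2sq J eps"
proof -
  define Ma where "Ma i = matvec J M a i" for i
  have lin: "matvec J M v2 i - matvec J M u2 i = Ma i" for i
  proof -
    have "Ma i = (\<Sum>j=1..J. M i j * v2 j - M i j * u2 j)"
      unfolding Ma_def matvec_def by (simp add: ha algebra_simps)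
    thus ?thesis unfolding matvec_def by (simp add: sum_subtractf)
  qed
  have pw: "a i^2 + (2*a i - b i)^2 - b i^2 - (2*b i - c i)^2 + 4*\<tau>*(a i * Ma i)
      \<le> 2*\<tau>*(eps i)^2 + 2*\<tau>*(a i)^2" if i: "i \<in> {1..J}" for i
  proof -
    have m1: "min (u2 i + 2/3 * \<tau> * matvec J M u2 i - 4/3 * u1 i + 1/3 * u0 i
              + 2/3 * \<tau> * q i - 2/3 * \<tau> * f i - 2/3 * \<tau> * 0) (u2 i - g i) = 0"
      using su i unfolding bdf2_step_def by blast
    have m2: "min (v2 i + 2/3 * \<tau> * matvec J M v2 i - 4/3 * v1 i + 1/3 * v0 i
              + 2/3 * \<tau> * q i - 2/3 * \<tau> * f i - 2/3 * \<tau> * eps i) (v2 i - g i) = 0"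
      using sv i unfolding bdf2_step_def by blast
    have P: "(a i + 2/3*\<tau>*Ma i - 4/3*b i + 1/3*c i - 2/3*\<tau>*eps i) * a i \<le> 0"
    proof -
      have e1: "(v2 i + 2/3 * \<tau> * matvec J M v2 i - 4/3 * v1 i + 1/3 * v0 i
              + 2/3 * \<tau> * q i - 2/3 * \<tau> * f i - 2/3 * \<tau> * eps i) - (u2 i + 2/3 * \<tau> * matvec J M u2 i - 4/3 * u1 i + 1/3 * u0 i
              + 2/3 * \<tau> * q i - 2/3 * \<tau> * f i - 2/3 * \<tau> * 0)
         = a i + 2/3*\<tau>*Ma i - 4/3*b i + 1/3*c i - 2/3*\<tau>*eps i"
        by (simp add: ha hb hc lin[of i, symmetric] field_simps)
      have e2: "(v2 i - g i) - (u2 i - g i) = a i" by (simp add: ha)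
      show ?thesis using var_pt[OF m1 m2] unfolding e1 e2 .
    qed
    have t1: "\<tau> * (eps i - a i)^2 \<ge> 0" using tau by simp
    have t2: "(a i - 2*b i + c i)^2 \<ge> 0" by simp
    have "6 * ((a i + 2/3*\<tau>*Ma i - 4/3*b i + 1/3*c i - 2/3*\<tau>*eps i) * a i)
      = a i^2 + (2*a i - b i)^2 - b i^2 - (2*b i - c i)^2 + 4*\<tau>*(a i * Ma i)
        - (2*\<tau>*(eps i)^2 + 2*\<tau>*(a i)^2) + (a i - 2*b i + c i)^2 + 2 * (\<tau> * (eps i - a i)^2)"
      by (simp add: power2_eq_square algebra_simps)
    thus ?thesis using P t1 t2 by linarith
  qed
  have "(\<Sum>i=1..J. a i^2 + (2*a i - b i)^2 - b i^2 - (2*b i - c i)^2 + 4*\<tau>*(a i * Ma i))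
      \<le> (\<Sum>i=1..J. 2*\<tau>*(eps i)^2 + 2*\<tau>*(a i)^2)"
    by (rule sum_mono) (rule pw)
  hence S: "l2sq J a + l2sq J (\<lambda>j. 2 * a j - b j) - l2sq J b - l2sq J (\<lambda>j. 2 * b j - c j)
     + 4*\<tau>*inner_J J a (matvec J M a) \<le> 2*\<tau>*l2sq J eps + 2*\<tau>*l2sq J a"
    unfolding l2sq_def inner_J_def Ma_def
    by (simp add: sum.distrib sum_subtractf sum_distrib_left)
  have C: "inner_J J a (matvec J M a) \<ge> \<eta> * (Nnorm J (\<lambda>j. a j / h))^2 - \<gamma> * l2sq J a"
    using coer l2norm_sq by metis
  have C2: "\<tau> * inner_J J a (matvec J M a) \<ge> \<tau> * (\<eta> * (Nnorm J (\<lambda>j. a j / h))^2 - \<gamma> * l2sq J a)"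
    using C tau by (rule mult_left_mono)
  have n1: "\<tau> * l2sq J (\<lambda>j. 2 * a j - b j) \<ge> 0" using tau l2sq_nonneg by simp
  have n2: "\<gamma> * (\<tau> * l2sq J (\<lambda>j. 2 * a j - b j)) \<ge> 0" using gam n1 by simp
  show ?thesis using S C2 n1 n2 by (simp add: algebra_simps)
qed

lemma lin_aux: "R = E + 2 * t \<Longrightarrow> 0 \<le> (t::real) \<Longrightarrow> x \<le> y \<Longrightarrow> y \<le> 2*z \<Longrightarrow> bb \<le> R/4 \<Longrightarrow> z \<le> R \<Longrightarrow> E \<le> 9*a + 2*b \<Longrightarrow> 0 \<le> b \<Longrightarrow> 0 \<le> a \<Longrightarrow> x + bb \<le> 30*(b + a + t)"
proof -
  assume h: "R = E + 2 * t" "0 \<le> (t::real)" "x \<le> y" "y \<le> 2*z" "bb \<le> R/4" "z \<le> R" "E \<le> 9*a + 2*b" "0 \<le> b" "0 \<le> a"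
  show ?thesis using h unfolding distrib_left by linarith
qed

lemma energy:
  fixes J N n :: nat and A :: "nat \<Rightarrow> nat \<Rightarrow> nat \<Rightarrow> real" and \<tau> \<eta> \<gamma> h :: real
   and u v e eps q fv gv :: "nat \<Rightarrow> nat \<Rightarrow> real"
  assumes coer: "\<forall>n e. inner_J J e (matvec J (A n) e) \<ge> \<eta> * (Nnorm J (\<lambda>j. e j / h))^2 - \<gamma> * (l2norm J e)^2"
   and su: "\<forall>n. 1 \<le> n \<and> n \<le> N \<longrightarrow> bdf2_step J (A (n+1)) \<tau> (u (n+1)) (u n) (u (n-1)) (q (n+1)) (fv (n+1)) (gv (n+1)) (\<lambda>j. 0)"
   and sv: "\<forall>n. 1 \<le> n \<and> n \<le> N \<longrightarrow> bdf2_step J (A (n+1)) \<tau> (v (n+1)) (v n) (v (n-1)) (q (n+1)) (fv (n+1)) (gv (n+1)) (eps n)"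
   and e_def: "e = (\<lambda>n j. v n j - u n j)"
   and tau: "\<tau> > 0" "(2+4*\<gamma>)*\<tau> \<le> 1/2" and gam: "\<gamma> \<ge> 0" and eta: "\<eta> > 0"
   and nN: "n \<le> N"
  shows "exp (- (2*(2+4*\<gamma>)) * (real n * \<tau>)) * (l2norm J (e (n + 1)))^2
             + \<tau> * \<eta> * (\<Sum>k=1..n. exp (- (2*(2+4*\<gamma>)) * (real k * \<tau>)) * (Nnorm J (\<lambda>j. e (k + 1) j / h))^2)
             \<le> 30 * ((l2norm J (e 0))^2 + (l2norm J (e 1))^2
                     + \<tau> * (\<Sum>k=1..n. exp (- (2*(2+4*\<gamma>)) * (real k * \<tau>)) * (l2norm J (eps k))^2))"
proof -
  define gb where "gb = 2 + 4*\<gamma>"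
  define th where "th k = exp (- (2*(2+4*\<gamma>)) * (real k * \<tau>))" for k :: nat
  define E where "E k = l2sq J (e k) + l2sq J (\<lambda>j. 2 * e k j - e (k-1) j)" for k
  define Nk where "Nk k = (Nnorm J (\<lambda>j. e (k + 1) j / h))^2" for k
  define Se where "Se k = l2sq J (eps k)" for k
  have gbpos: "gb \<ge> 2" using gam gb_def by simp
  have Enn: "E k \<ge> 0" for k unfolding E_def using l2sq_nonneg add_nonneg_nonneg by metis
  have thpos: "th k > 0" for k unfolding th_def by simp
  have step: "(1 - gb*\<tau>) * E (k+1) + 4*\<tau>*\<eta>*Nk k \<le> E k + 2*\<tau>*Se k"
    if k: "1 \<le> k" "k \<le> N" for k
  proof -
    have c: "\<forall>e. inner_J J e (matvec J (A (k+1)) e) \<ge> \<eta> * (Nnorm J (\<lambda>j. e j / h))^2 - \<gamma> * (l2norm J e)^2"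
      using coer by blast
    have "(1 - (2+4*\<gamma>)*\<tau>) * (l2sq J (e (k+1)) + l2sq J (\<lambda>j. 2 * e (k+1) j - e k j))
          + 4*\<tau>*\<eta>*(Nnorm J (\<lambda>j. e (k+1) j / h))^2
        \<le> l2sq J (e k) + l2sq J (\<lambda>j. 2 * e k j - e (k-1) j) + 2*\<tau>*l2sq J (eps k)"
      by (rule step_ineq[OF c su[rule_format, OF conjI[OF k]] sv[rule_format, OF conjI[OF k]]])
         (use tau gam e_def in auto)
    thus ?thesis unfolding E_def Nk_def Se_def gb_def by simp
  qed
  have dec: "th (k+1) \<le> th k * (1 - gb*\<tau>)" for k
  proof -
    have "th (k+1) = th k * exp (-2 * (gb*\<tau>))"
      unfolding th_def gb_def by (simp add: exp_add[symmetric] algebra_simps)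
    also have "\<dots> \<le> th k * (1 - gb*\<tau>)"
      using exp_le[of "gb*\<tau>"] tau gbpos thpos[of k] gb_def by (intro mult_left_mono) auto
    finally show ?thesis .
  qed
  have ind: "n \<le> N \<longrightarrow> th n * (1 - gb*\<tau>) * E (n+1) + 4*\<tau>*\<eta>*(\<Sum>k=1..n. th k * Nk k)
     \<le> E 1 + 2*\<tau>*(\<Sum>k=1..n. th k * Se k)" for n
  proof (induction n)
    case 0
    have "(1 - gb*\<tau>) * E 1 \<le> E 1" using Enn[of 1] tau gbpos
      by (simp add: algebra_simps)
    thus ?case by (simp add: th_def)
  next
    case (Suc n)
    show ?case
    proof
      assume sn: "Suc n \<le> N"
      have IH: "th n * (1 - gb*\<tau>) * E (n+1) + 4*\<tau>*\<eta>*(\<Sum>k=1..n. th k * Nk k)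
        \<le> E 1 + 2*\<tau>*(\<Sum>k=1..n. th k * Se k)" using Suc sn by simp
      have st: "(1 - gb*\<tau>) * E (n+2) + 4*\<tau>*\<eta>*Nk (n+1) \<le> E (n+1) + 2*\<tau>*Se (n+1)"
        using step[of "n+1"] sn by simp
      have st2: "th (n+1) * ((1 - gb*\<tau>) * E (n+2) + 4*\<tau>*\<eta>*Nk (n+1))
           \<le> th (n+1) * (E (n+1) + 2*\<tau>*Se (n+1))"
        using st thpos[of "n+1"] by (intro mult_left_mono) auto
      have d: "th (n+1) * E (n+1) \<le> th n * (1 - gb*\<tau>) * E (n+1)"
        using dec[of n] Enn[of "n+1"] by (intro mult_right_mono) auto
      show "th (Suc n) * (1 - gb*\<tau>) * E (Suc n+1) + 4*\<tau>*\<eta>*(\<Sum>k=1..Suc n. th k * Nk k)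
     \<le> E 1 + 2*\<tau>*(\<Sum>k=1..Suc n. th k * Se k)"
        using IH st2 d by (simp add: algebra_simps)
    qed
  qed
  have P: "th n * (1 - gb*\<tau>) * E (n+1) + 4*\<tau>*\<eta>*(\<Sum>k=1..n. th k * Nk k)
     \<le> E 1 + 2*\<tau>*(\<Sum>k=1..n. th k * Se k)" using ind nN by blast
  define R where "R = E 1 + 2*\<tau>*(\<Sum>k=1..n. th k * Se k)"
  have Sen: "(\<Sum>k=1..n. th k * Se k) \<ge> 0"
    using thpos l2sq_nonneg unfolding Se_def by (intro sum_nonneg) (simp add: less_imp_le)
  have Nkn: "(\<Sum>k=1..n. th k * Nk k) \<ge> 0"
    using thpos unfolding Nk_def by (intro sum_nonneg) (simp add: less_imp_le)
  have A0: "th n * (1 - gb*\<tau>) * E (n+1) \<ge> 0"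
    using thpos[of n] Enn[of "n+1"] tau gb_def by simp
  have B: "\<tau> * \<eta> * (\<Sum>k=1..n. th k * Nk k) \<le> R / 4" using P A0 R_def by simp
  have A1: "th n * l2sq J (e (n+1)) \<le> th n * E (n+1)"
    using thpos[of n] l2sq_nonneg unfolding E_def by (intro mult_left_mono) auto
  have A2: "th n * E (n+1) \<le> 2 * (th n * (1 - gb*\<tau>) * E (n+1))"
  proof -
    have "th n * E (n+1) * 1 \<le> th n * E (n+1) * (2 * (1 - gb*\<tau>))"
      using thpos[of n] Enn[of "n+1"] tau gb_def by (intro mult_left_mono) auto
    thus ?thesis by (simp add: algebra_simps)
  qed
  have E1: "E 1 \<le> 9 * l2sq J (e 1) + 2 * l2sq J (e 0)"
  proof -
    have "l2sq J (\<lambda>j. 2 * e 1 j - e 0 j) \<le> (\<Sum>j=1..J. 8 * (e 1 j)^2 + 2 * (e 0 j)^2)"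
      unfolding l2sq_def
    proof (rule sum_mono)
      fix j
      have "0 \<le> (2 * e 1 j + e 0 j)^2" by simp
      thus "(2 * e 1 j - e 0 j)^2 \<le> 8 * (e 1 j)^2 + 2 * (e 0 j)^2"
        by (simp add: power2_eq_square algebra_simps)
    qed
    moreover have "(\<Sum>j=1..J. 8 * (e 1 j)^2 + 2 * (e 0 j)^2) = 8 * l2sq J (e 1) + 2 * l2sq J (e 0)"
      unfolding l2sq_def by (simp add: sum.distrib sum_distrib_left)
    ultimately show ?thesis unfolding E_def by simp
  qed
  have XR: "th n * (1 - gb*\<tau>) * E (n+1) \<le> R"
  proof -
    have "4*\<tau>*\<eta>*(\<Sum>k=1..n. th k * Nk k) \<ge> 0" using tau eta Nkn by simp
    thus ?thesis using P R_def by linarith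
  qed
  have "th n * (l2norm J (e (n + 1)))^2 + \<tau> * \<eta> * (\<Sum>k=1..n. th k * Nk k)
      \<le> 30 * ((l2norm J (e 0))^2 + (l2norm J (e 1))^2 + \<tau> * (\<Sum>k=1..n. th k * Se k))"
    unfolding l2norm_sq
  proof -
    define x where "x = th n * l2sq J (e (n + 1))"
    define y where "y = th n * E (n + 1)"
    define z where "z = th n * (1 - gb*\<tau>) * E (n+1)"
    define bb where "bb = \<tau> * \<eta> * (\<Sum>k=1..n. th k * Nk k)"
    define t where "t = \<tau> * (\<Sum>k=1..n. th k * Se k)"
    have "R = E 1 + 2 * t" unfolding R_def t_def by simp
    moreover have "t \<ge> 0" unfolding t_def using tau Sen by simp
    ultimately have "x + bb \<le> 30 * (l2sq J (e 0) + l2sq J (e 1) + t)"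
      using A1 A2 B XR E1 l2sq_nonneg[of J "e 0"] l2sq_nonneg[of J "e 1"]
      unfolding x_def[symmetric] y_def[symmetric] z_def[symmetric] bb_def[symmetric]
      by (rule lin_aux)
    thus "x + bb \<le> 30 * (l2sq J (e 0) + l2sq J (e 1) + t)" .
  qed
  thus ?thesis unfolding th_def Nk_def Se_def l2norm_sq .
qed



theorem proposition4p7:
  fixes T Xmin Xmax \<eta> \<gamma> :: real
    and a b r :: "real \<Rightarrow> real \<Rightarrow> real"
    and J :: nat
  assumes T_pos: "T > 0"
    and dom: "Xmin < Xmax"
    and J_pos: "J \<ge> 1"
    and a_bdd: "\<exists>M. \<forall>t x. \<bar>a t x\<bar> \<le> M"
    and b_bdd: "\<exists>M. \<forall>t x. \<bar>b t x\<bar> \<le> M"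
    and r_bdd: "\<exists>M. \<forall>t x. \<bar>r t x\<bar> \<le> M"
    and elliptic: "\<exists>\<eta>0>0. \<forall>t x. a t x \<ge> \<eta>0"
    and a_lip: "\<exists>L. \<forall>t x y. \<bar>a t x - a t y\<bar> \<le> L * \<bar>x - y\<bar>"
    and eta_pos: "\<eta> > 0" and gamma_nonneg: "\<gamma> \<ge> 0"
    and coercive: "\<forall>t (e :: nat \<Rightarrow> real).
        inner_J J e (matvec J (fd_matrix a b r Xmin ((Xmax - Xmin) / real (J + 1)) t) e)
          \<ge> \<eta> * (Nnorm J (\<lambda>j. e j / ((Xmax - Xmin) / real (J + 1))))^2
             - \<gamma> * (l2norm J e)^2"
  shows "\<exists>\<tau>0 > 0. \<exists>C1. \<exists>\<gamma>bar > 0.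
     \<forall>(N :: nat) \<tau> (\<phi> :: real \<Rightarrow> real \<Rightarrow> real) (f :: real \<Rightarrow> real \<Rightarrow> real)
       (q :: nat \<Rightarrow> nat \<Rightarrow> real) (u :: nat \<Rightarrow> nat \<Rightarrow> real) (v :: nat \<Rightarrow> nat \<Rightarrow> real)
       (\<epsilon> :: nat \<Rightarrow> nat \<Rightarrow> real).
       let h = (Xmax - Xmin) / real (J + 1);
           xg = (\<lambda>j. Xmin + real j * h);
           fv = (\<lambda>n j. f (real n * \<tau>) (xg j));
           gv = (\<lambda>n j. \<phi> (real n * \<tau>) (xg j) + f (real n * \<tau>) (xg j));
           A = (\<lambda>n. fd_matrix a b r Xmin h (real n * \<tau>));
           e = (\<lambda>n j. v n j - u n j)
       in
       (N > 0 \<and> \<tau> = T / real N \<and> \<tau> \<le> \<tau>0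
        \<and> (\<forall>n. 1 \<le> n \<and> n \<le> N \<longrightarrow>
              bdf2_step J (A (n + 1)) \<tau> (u (n + 1)) (u n) (u (n - 1))
                (q (n + 1)) (fv (n + 1)) (gv (n + 1)) (\<lambda>j. 0))
        \<and> (\<forall>n. 1 \<le> n \<and> n \<le> N \<longrightarrow>
              bdf2_step J (A (n + 1)) \<tau> (v (n + 1)) (v n) (v (n - 1))
                (q (n + 1)) (fv (n + 1)) (gv (n + 1)) (\<epsilon> n)))
       \<longrightarrow> (\<forall>n. real n * \<tau> \<le> T \<longrightarrow>
             exp (- \<gamma>bar * (real n * \<tau>)) * (l2norm J (e (n + 1)))^2
             + \<tau> * \<eta> * (\<Sum>k=1..n. exp (- \<gamma>bar * (real k * \<tau>))
                                 * (Nnorm J (\<lambda>j. e (k + 1) j / h))^2)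
             \<le> C1 * ((l2norm J (e 0))^2 + (l2norm J (e 1))^2
                     + \<tau> * (\<Sum>k=1..n. exp (- \<gamma>bar * (real k * \<tau>)) * (l2norm J (\<epsilon> k))^2)))"
  proof -
  define gb where "gb = 2 + 4*\<gamma>"
  have gbpos: "gb > 0" using gamma_nonneg gb_def by simp
  have key: "\<forall>(N :: nat) \<tau> (\<phi> :: real \<Rightarrow> real \<Rightarrow> real) (f :: real \<Rightarrow> real \<Rightarrow> real)
       (q :: nat \<Rightarrow> nat \<Rightarrow> real) (u :: nat \<Rightarrow> nat \<Rightarrow> real) (v :: nat \<Rightarrow> nat \<Rightarrow> real)
       (\<epsilon> :: nat \<Rightarrow> nat \<Rightarrow> real).
       let h = (Xmax - Xmin) / real (J + 1);
           xg = (\<lambda>j. Xmin + real j * h);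
           fv = (\<lambda>n j. f (real n * \<tau>) (xg j));
           gv = (\<lambda>n j. \<phi> (real n * \<tau>) (xg j) + f (real n * \<tau>) (xg j));
           A = (\<lambda>n. fd_matrix a b r Xmin h (real n * \<tau>));
           e = (\<lambda>n j. v n j - u n j)
       in
       (N > 0 \<and> \<tau> = T / real N \<and> \<tau> \<le> 1 / (2*gb)
        \<and> (\<forall>n. 1 \<le> n \<and> n \<le> N \<longrightarrow>
              bdf2_step J (A (n + 1)) \<tau> (u (n + 1)) (u n) (u (n - 1))
                (q (n + 1)) (fv (n + 1)) (gv (n + 1)) (\<lambda>j. 0))
        \<and> (\<forall>n. 1 \<le> n \<and> n \<le> N \<longrightarrow>
              bdf2_step J (A (n + 1)) \<tau> (v (n + 1)) (v n) (v (n - 1))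
                (q (n + 1)) (fv (n + 1)) (gv (n + 1)) (\<epsilon> n)))
       \<longrightarrow> (\<forall>n. real n * \<tau> \<le> T \<longrightarrow>
             exp (- (2*(2+4*\<gamma>)) * (real n * \<tau>)) * (l2norm J (e (n + 1)))^2
             + \<tau> * \<eta> * (\<Sum>k=1..n. exp (- (2*(2+4*\<gamma>)) * (real k * \<tau>))
                                 * (Nnorm J (\<lambda>j. e (k + 1) j / h))^2)
             \<le> 30 * ((l2norm J (e 0))^2 + (l2norm J (e 1))^2
                     + \<tau> * (\<Sum>k=1..n. exp (- (2*(2+4*\<gamma>)) * (real k * \<tau>)) * (l2norm J (\<epsilon> k))^2)))"
  proof (intro allI)
    fix N :: nat and \<tau> and \<phi> f :: "real \<Rightarrow> real \<Rightarrow> real" and q u v \<epsilon> :: "nat \<Rightarrow> nat \<Rightarrow> real"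
    show "let h = (Xmax - Xmin) / real (J + 1);
           xg = (\<lambda>j. Xmin + real j * h);
           fv = (\<lambda>n j. f (real n * \<tau>) (xg j));
           gv = (\<lambda>n j. \<phi> (real n * \<tau>) (xg j) + f (real n * \<tau>) (xg j));
           A = (\<lambda>n. fd_matrix a b r Xmin h (real n * \<tau>));
           e = (\<lambda>n j. v n j - u n j)
       in
       (N > 0 \<and> \<tau> = T / real N \<and> \<tau> \<le> 1 / (2*gb)
        \<and> (\<forall>n. 1 \<le> n \<and> n \<le> N \<longrightarrow>
              bdf2_step J (A (n + 1)) \<tau> (u (n + 1)) (u n) (u (n - 1))
                (q (n + 1)) (fv (n + 1)) (gv (n + 1)) (\<lambda>j. 0))
        \<and> (\<forall>n. 1 \<le> n \<and> n \<le> N \<longrightarrow>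
              bdf2_step J (A (n + 1)) \<tau> (v (n + 1)) (v n) (v (n - 1))
                (q (n + 1)) (fv (n + 1)) (gv (n + 1)) (\<epsilon> n)))
       \<longrightarrow> (\<forall>n. real n * \<tau> \<le> T \<longrightarrow>
             exp (- (2*(2+4*\<gamma>)) * (real n * \<tau>)) * (l2norm J (e (n + 1)))^2
             + \<tau> * \<eta> * (\<Sum>k=1..n. exp (- (2*(2+4*\<gamma>)) * (real k * \<tau>))
                                 * (Nnorm J (\<lambda>j. e (k + 1) j / h))^2)
             \<le> 30 * ((l2norm J (e 0))^2 + (l2norm J (e 1))^2
                     + \<tau> * (\<Sum>k=1..n. exp (- (2*(2+4*\<gamma>)) * (real k * \<tau>)) * (l2norm J (\<epsilon> k))^2)))"
      unfolding Let_def
    proof (intro impI allI)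
      fix n :: nat
      define h where "h = (Xmax - Xmin) / real (J + 1)"
      assume H: "0 < N \<and> \<tau> = T / real N \<and> \<tau> \<le> 1 / (2 * gb) \<and>
        (\<forall>n. 1 \<le> n \<and> n \<le> N \<longrightarrow>
             bdf2_step J (fd_matrix a b r Xmin h (real (n + 1) * \<tau>)) \<tau> (u (n + 1)) (u n) (u (n - 1))
              (q (n + 1)) (\<lambda>j. f (real (n + 1) * \<tau>) (Xmin + real j * h))
              (\<lambda>j. \<phi> (real (n + 1) * \<tau>) (Xmin + real j * h) + f (real (n + 1) * \<tau>) (Xmin + real j * h)) (\<lambda>j. 0)) \<and>
        (\<forall>n. 1 \<le> n \<and> n \<le> N \<longrightarrow>
             bdf2_step J (fd_matrix a b r Xmin h (real (n + 1) * \<tau>)) \<tau> (v (n + 1)) (v n) (v (n - 1))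
              (q (n + 1)) (\<lambda>j. f (real (n + 1) * \<tau>) (Xmin + real j * h))
              (\<lambda>j. \<phi> (real (n + 1) * \<tau>) (Xmin + real j * h) + f (real (n + 1) * \<tau>) (Xmin + real j * h)) (\<epsilon> n))"
        and nT: "real n * \<tau> \<le> T"
      have N0: "N > 0" and tauN: "\<tau> = T / real N" and tau0: "\<tau> \<le> 1 / (2*gb)" using H by auto
      have taupos: "\<tau> > 0" using N0 tauN T_pos by simp
      have nN: "n \<le> N"
      proof -
        have "real n * T / real N \<le> T" using nT tauN by simp
        hence "real n * T \<le> T * real N" using N0 by (simp add: divide_simps)
        hence "real n \<le> real N" using T_pos by (simp add: mult.commute)
        thus ?thesis by simp
      qed
      have tg: "(2+4*\<gamma>)*\<tau> \<le> 1/2"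
      proof -
        have "gb * \<tau> \<le> gb * (1/(2*gb))" using tau0 gbpos by (intro mult_left_mono) auto
        moreover have "gb * (1/(2*gb)) = 1/2" using gbpos by simp
        ultimately have "gb * \<tau> \<le> 1/2" by simp
        thus ?thesis unfolding gb_def .
      qed
      have coer': "\<forall>n e. inner_J J e (matvec J ((\<lambda>n. fd_matrix a b r Xmin h (real n * \<tau>)) n) e) \<ge> \<eta> * (Nnorm J (\<lambda>j. e j / h))^2 - \<gamma> * (l2norm J e)^2"
        using coercive unfolding h_def by simp
      show "exp (- (2*(2+4*\<gamma>)) * (real n * \<tau>)) * (l2norm J (\<lambda>j. v (n + 1) j - u (n + 1) j))^2
             + \<tau> * \<eta> * (\<Sum>k=1..n. exp (- (2*(2+4*\<gamma>)) * (real k * \<tau>))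
                                 * (Nnorm J (\<lambda>j. (v (k + 1) j - u (k + 1) j) / ((Xmax - Xmin) / real (J + 1))))^2)
             \<le> 30 * ((l2norm J (\<lambda>j. v 0 j - u 0 j))^2 + (l2norm J (\<lambda>j. v 1 j - u 1 j))^2
                     + \<tau> * (\<Sum>k=1..n. exp (- (2*(2+4*\<gamma>)) * (real k * \<tau>)) * (l2norm J (\<epsilon> k))^2))"
        unfolding h_def[symmetric]
        by (rule energy[OF coer', where N=N and u=u and q=q and fv="\<lambda>n j. f (real n * \<tau>) (Xmin + real j * h)"
            and gv="\<lambda>n j. \<phi> (real n * \<tau>) (Xmin + real j * h) + f (real n * \<tau>) (Xmin + real j * h)" and v=v and eps=\<epsilon>
            and e="\<lambda>n j. v n j - u n j" and n=n])
           (use H taupos tg gamma_nonneg eta_pos nN in blast)+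
    qed
  qed
  show ?thesis
    apply (rule exI[of _ "1/(2*gb)"])
    apply (rule conjI)
    using gbpos apply simp
    apply (rule exI[of _ 30])
    apply (rule exI[of _ "2*(2+4*\<gamma>)"])
    apply (rule conjI)
    using gamma_nonneg apply simp
    using key by blast
qed

end
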